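(* Let $\mathsf{M}$ be the subspace of $\ell_1$ with underlying set $\{x \in \prod_{i\in\mathbb{N}} M_i : \sum_{i} |x(i)| < \infty\}$, where $M_i = \{ j\cdot 2^{-i} \mid j \in \{0,\dots,2^i\}\}$. Let $(x_n)_n$ be a sequence in $\mathsf{M}$ and $x_\infty\in\mathsf{M}$. Then $(x_n)_n$ converges in $\mathsf{M}$ to $x_\infty$ if and only if both of the following hold: (a) for every $i\in\mathbb{N}$ there is $n_i\in\mathbb{N}$ with $x_n(i)=x_\infty(i)$ for all $n\ge n_i$; (b) the sequence $(\|x_n\|_1)_n$ converges to $\|x_\infty\|_1$ in $\mathbb{R}$.
   Context: $\ell_1$ is the set of real sequences $x$ with $\|x\|_1=\sum_{i}|x(i)|<\infty$, topologised by the metric $\|x-y\|_1$; $\mathsf{M}$ carries the subspace topology. *)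

theory Defs
  imports "HOL-Analysis.Analysis"
begin

definition grid :: "nat \<Rightarrow> real set" where
  "grid i = {real j / 2 ^ i | j. j \<le> 2 ^ i}"

definition l1_norm :: "(nat \<Rightarrow> real) \<Rightarrow> real" where
  "l1_norm x = (\<Sum>i. \<bar>x i\<bar>)"

definition Mspace :: "(nat \<Rightarrow> real) set" where
  "Mspace = {x. (\<forall>i. x i \<in> grid i) \<and> summable (\<lambda>i. \<bar>x i\<bar>)}"

text \<open>Convergence in l1 (and hence in the subspace M, whose topology is induced
  by the restricted metric): the l1 distance tends to zero.\<close>
definition l1_converges :: "(nat \<Rightarrow> nat \<Rightarrow> real) \<Rightarrow> (nat \<Rightarrow> real) \<Rightarrow> bool" where
  "l1_converges xs y \<longleftrightarrow> (\<lambda>n. l1_norm (\<lambda>i. xs n i - y i)) \<longlonglongrightarrow> 0"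

end

theory Submission
  imports Defs
begin

lemma diff_summable:
  fixes a b :: "nat \<Rightarrow> real"
  assumes "summable (\<lambda>i. \<bar>a i\<bar>)" "summable (\<lambda>i. \<bar>b i\<bar>)"
  shows "summable (\<lambda>i. \<bar>a i - b i\<bar>)"
proof -
  have "\<exists>N. \<forall>n\<ge>N. norm \<bar>a n - b n\<bar> \<le> \<bar>a n\<bar> + \<bar>b n\<bar>" by auto
  moreover have "summable (\<lambda>n. \<bar>a n\<bar> + \<bar>b n\<bar>)" using assms by (rule summable_add)
  ultimately show ?thesis by (rule summable_comparison_test)
qed

lemma coord_le:
  fixes a b :: "nat \<Rightarrow> real"
  assumes "summable (\<lambda>i. \<bar>a i - b i\<bar>)"
  shows "\<bar>a i - b i\<bar> \<le> l1_norm (\<lambda>i. a i - b i)"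
proof -
  have "sum (\<lambda>i. \<bar>a i - b i\<bar>) {i} \<le> (\<Sum>i. \<bar>a i - b i\<bar>)"
    by (rule sum_le_suminf[OF assms]) auto
  thus ?thesis by (simp add: l1_norm_def)
qed

lemma norm_le:
  fixes a b :: "nat \<Rightarrow> real"
  assumes "summable (\<lambda>i. \<bar>a i\<bar>)" "summable (\<lambda>i. \<bar>b i\<bar>)"
  shows "l1_norm a \<le> l1_norm (\<lambda>i. a i - b i) + l1_norm b"
proof -
  have s: "summable (\<lambda>i. \<bar>a i - b i\<bar>)" using diff_summable assms by blast
  have "(\<Sum>i. \<bar>a i\<bar>) \<le> (\<Sum>i. \<bar>a i - b i\<bar> + \<bar>b i\<bar>)"
    by (rule suminf_le) (auto intro: summable_add s assms)
  also have "\<dots> = (\<Sum>i. \<bar>a i - b i\<bar>) + (\<Sum>i. \<bar>b i\<bar>)"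
    by (rule suminf_add[symmetric]) (auto intro: s assms)
  finally show ?thesis by (simp add: l1_norm_def)
qed

lemma grid_eq:
  assumes "a \<in> grid i" "b \<in> grid i" "\<bar>a - b\<bar> < 1 / 2 ^ i"
  shows "a = b"
proof -
  obtain j k :: nat where a: "a = real j / 2 ^ i" and b: "b = real k / 2 ^ i"
    using assms unfolding grid_def by auto
  have "\<bar>real j - real k\<bar> / 2 ^ i < 1 / 2 ^ i"
    using assms(3) by (simp add: a b diff_divide_distrib[symmetric])
  hence "\<bar>real j - real k\<bar> < 1" by (simp add: divide_less_cancel)
  hence "j = k" by linarith
  thus ?thesis using a b by simp
qed

theorem lemma3p1:
  fixes xs :: "nat \<Rightarrow> nat \<Rightarrow> real" and xinf :: "nat \<Rightarrow> real"
  assumes "\<And>n. xs n \<in> Mspace" and "xinf \<in> Mspace"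
  shows "l1_converges xs xinf \<longleftrightarrow>
    ((\<forall>i. \<exists>ni. \<forall>n\<ge>ni. xs n i = xinf i) \<and>
     (\<lambda>n. l1_norm (xs n)) \<longlonglongrightarrow> l1_norm xinf)"
proof -
  define d where "d n = l1_norm (\<lambda>i. xs n i - xinf i)" for n
  have sx: "summable (\<lambda>i. \<bar>xs n i\<bar>)" for n using assms(1)[of n] by (simp add: Mspace_def)
  have s0: "summable (\<lambda>i. \<bar>xinf i\<bar>)" using assms(2) by (simp add: Mspace_def)
  have gx: "xs n i \<in> grid i" for n i using assms(1)[of n] by (simp add: Mspace_def)
  have g0: "xinf i \<in> grid i" for i using assms(2) by (simp add: Mspace_def)
  have sd: "summable (\<lambda>i. \<bar>xs n i - xinf i\<bar>)" for n using diff_summable sx s0 by blast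
  have dnn: "0 \<le> d n" for n unfolding d_def l1_norm_def
    by (rule suminf_nonneg[OF sd]) auto
  have cle: "\<bar>xs n i - xinf i\<bar> \<le> d n" for n i unfolding d_def by (rule coord_le[OF sd])
  have nle: "\<bar>l1_norm (xs n) - l1_norm xinf\<bar> \<le> d n" for n
  proof -
    have 1: "l1_norm (xs n) \<le> d n + l1_norm xinf" unfolding d_def by (rule norm_le[OF sx s0])
    have 2: "l1_norm xinf \<le> l1_norm (\<lambda>i. xinf i - xs n i) + l1_norm (xs n)"
      by (rule norm_le[OF s0 sx])
    have "l1_norm (\<lambda>i. xinf i - xs n i) = d n"
      unfolding d_def l1_norm_def by (simp add: abs_minus_commute)
    thus ?thesis using 1 2 by linarith
  qed
  have conv: "l1_converges xs xinf \<longleftrightarrow> d \<longlonglongrightarrow> 0"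
    by (simp add: l1_converges_def d_def[abs_def])
  show ?thesis unfolding conv
  proof
    assume L: "d \<longlonglongrightarrow> 0"
    have A: "\<exists>ni. \<forall>n\<ge>ni. xs n i = xinf i" for i
    proof -
      have "eventually (\<lambda>n. dist (d n) 0 < 1 / 2 ^ i) sequentially"
        using L by (simp add: tendsto_iff)
      then obtain N where N: "\<And>n. n \<ge> N \<Longrightarrow> \<bar>d n\<bar> < 1 / 2 ^ i"
        by (auto simp: eventually_sequentially)
      show ?thesis
      proof (intro exI allI impI)
        fix n assume "n \<ge> N"
        hence "\<bar>xs n i - xinf i\<bar> < 1 / 2 ^ i" using N[of n] cle[of n i] by linarith
        thus "xs n i = xinf i" using grid_eq gx g0 by blast
      qed
    qed
    have B: "(\<lambda>n. l1_norm (xs n)) \<longlonglongrightarrow> l1_norm xinf"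
      unfolding tendsto_iff
    proof (intro allI impI)
      fix e :: real assume "e > 0"
      hence "eventually (\<lambda>n. dist (d n) 0 < e) sequentially" using L by (simp add: tendsto_iff)
      thus "eventually (\<lambda>n. dist (l1_norm (xs n)) (l1_norm xinf) < e) sequentially"
        by eventually_elim (smt (verit) nle dist_real_def)
    qed
    show "(\<forall>i. \<exists>ni. \<forall>n\<ge>ni. xs n i = xinf i) \<and> (\<lambda>n. l1_norm (xs n)) \<longlonglongrightarrow> l1_norm xinf"
      using A B by blast
  next
    assume H: "(\<forall>i. \<exists>ni. \<forall>n\<ge>ni. xs n i = xinf i) \<and> (\<lambda>n. l1_norm (xs n)) \<longlonglongrightarrow> l1_norm xinf"
    show "d \<longlonglongrightarrow> 0" unfolding tendsto_iff
    proof (intro allI impI)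
      fix e :: real assume e: "e > 0"
      obtain N where N: "norm (\<Sum>i. \<bar>xinf (i + N)\<bar>) < e / 3"
        using suminf_exist_split[OF _ s0, of "e/3"] e by auto
      define T where "T = (\<Sum>i. \<bar>xinf (i + N)\<bar>)"
      have TN: "T < e/3" using N by (simp add: T_def)
      have ev1: "eventually (\<lambda>n. \<forall>i\<in>{..<N}. xs n i = xinf i) sequentially"
      proof (rule eventually_ball_finite)
        show "\<forall>i\<in>{..<N}. eventually (\<lambda>n. xs n i = xinf i) sequentially"
          using H[THEN conjunct1] by (auto simp: eventually_sequentially)
      qed auto
      have ev2: "eventually (\<lambda>n. dist (l1_norm (xs n)) (l1_norm xinf) < e/3) sequentially"
        proof -
        have e3: "e/3 > 0" using e by simp
        have T: "(\<lambda>n. l1_norm (xs n)) \<longlonglongrightarrow> l1_norm xinf" using H[THEN conjunct2] .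
        show ?thesis using T[unfolded tendsto_iff, rule_format, OF e3] .
      qed
      show "eventually (\<lambda>n. dist (d n) 0 < e) sequentially"
        using ev1 ev2
      proof eventually_elim
        case (elim n)
        have st: "summable (\<lambda>i. \<bar>xs n (i+N)\<bar>)"
          using summable_iff_shift[where k=N and f="\<lambda>i. \<bar>xs n i\<bar>"] sx[of n] by simp
        have st0: "summable (\<lambda>i. \<bar>xinf (i+N)\<bar>)"
          using summable_iff_shift[where k=N and f="\<lambda>i. \<bar>xinf i\<bar>"] s0 by simp
        have std: "summable (\<lambda>i. \<bar>xs n (i+N) - xinf (i+N)\<bar>)"
          using sd[of n] summable_iff_shift[where k=N and f="\<lambda>i. \<bar>xs n i - xinf i\<bar>"] by simp
        have "d n = (\<Sum>i. \<bar>xs n (i+N) - xinf (i+N)\<bar>) + (\<Sum>i<N. \<bar>xs n i - xinf i\<bar>)"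
          unfolding d_def l1_norm_def by (rule suminf_split_initial_segment[OF sd])
        also have "(\<Sum>i<N. \<bar>xs n i - xinf i\<bar>) = 0" using elim(1) by simp
        finally have d1: "d n = (\<Sum>i. \<bar>xs n (i+N) - xinf (i+N)\<bar>)" by simp
        have "(\<Sum>i. \<bar>xs n (i+N) - xinf (i+N)\<bar>) \<le> (\<Sum>i. \<bar>xs n (i+N)\<bar> + \<bar>xinf (i+N)\<bar>)"
          by (rule suminf_le[OF _ std summable_add[OF st st0]]) simp
        also have "\<dots> = (\<Sum>i. \<bar>xs n (i+N)\<bar>) + T"
          unfolding T_def by (rule suminf_add[OF st st0, symmetric])
        finally have d2: "d n \<le> (\<Sum>i. \<bar>xs n (i+N)\<bar>) + T" using d1 by simp
        have n1: "l1_norm (xs n) = (\<Sum>i. \<bar>xs n (i+N)\<bar>) + (\<Sum>i<N. \<bar>xs n i\<bar>)"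
          unfolding l1_norm_def by (rule suminf_split_initial_segment[OF sx])
        have n2: "l1_norm xinf = T + (\<Sum>i<N. \<bar>xinf i\<bar>)"
          unfolding l1_norm_def T_def by (rule suminf_split_initial_segment[OF s0])
        have eqs: "(\<Sum>i<N. \<bar>xs n i\<bar>) = (\<Sum>i<N. \<bar>xinf i\<bar>)" using elim(1) by simp
        have "d n \<le> l1_norm (xs n) - l1_norm xinf + 2 * T" using d2 n1 n2 eqs by linarith
        moreover have "\<bar>l1_norm (xs n) - l1_norm xinf\<bar> < e/3"
          using elim(2) by (simp only: dist_real_def)
        ultimately have "\<bar>d n\<bar> < e" using TN dnn[of n] by linarith
        thus ?case by (simp only: dist_real_def diff_zero)
      qed
    qed
  qed
qed

end
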